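(* Let $k\in\mathbb{R}_{\ge 0}$ and let $G$ be a graph on $n\ge 2$ vertices such that every subgraph $H\subseteq G$ with $|V(H)|\ge 3$ satisfies $|E(H)|\le k(|V(H)|-2)$. If $G$ admits an interval colouring, then $t(G)\le \frac{k}{2}n+1-k$.
   Context: An interval colouring of a graph $G$ is a proper edge-colouring $c\colon E(G)\to\mathbb{N}$ such that for every vertex $v$, the set of colours on edges incident to $v$ is a set of consecutive integers. For an interval colourable graph $G$, $t(G)$ denotes the greatest number of distinct colours used in an interval colouring of $G$. *)

theory Defs
  imports Complex_Main
begin

definition simple_graph :: "'a set \<Rightarrow> 'a set set \<Rightarrow> bool" where
  "simple_graph V E \<longleftrightarrow> finite V \<and> (\<forall>e\<in>E. e \<subseteq> V \<and> card e = 2)"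

definition subgraph :: "'a set \<Rightarrow> 'a set set \<Rightarrow> 'a set \<Rightarrow> 'a set set \<Rightarrow> bool" where
  "subgraph W F V E \<longleftrightarrow> W \<subseteq> V \<and> F \<subseteq> E \<and> (\<forall>e\<in>F. e \<subseteq> W)"

definition proper_edge_colouring :: "'a set set \<Rightarrow> ('a set \<Rightarrow> nat) \<Rightarrow> bool" where
  "proper_edge_colouring E c \<longleftrightarrow>
     (\<forall>e\<in>E. \<forall>f\<in>E. e \<noteq> f \<and> e \<inter> f \<noteq> {} \<longrightarrow> c e \<noteq> c f)"

text \<open>A set of consecutive integers (the empty set counts as consecutive).\<close>
definition consecutive :: "nat set \<Rightarrow> bool" where
  "consecutive S \<longleftrightarrow> (\<exists>a b. S = {a..b})"

definition interval_colouring :: "'a set \<Rightarrow> 'a set set \<Rightarrow> ('a set \<Rightarrow> nat) \<Rightarrow> bool" where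
  "interval_colouring V E c \<longleftrightarrow> proper_edge_colouring E c \<and>
     (\<forall>v\<in>V. consecutive (c ` {e\<in>E. v \<in> e}))"

definition interval_colourable :: "'a set \<Rightarrow> 'a set set \<Rightarrow> bool" where
  "interval_colourable V E \<longleftrightarrow> (\<exists>c. interval_colouring V E c)"

definition t_max :: "'a set \<Rightarrow> 'a set set \<Rightarrow> nat" where
  "t_max V E = Max {card (c ` E) | c. interval_colouring V E c}"

end

theory Submission
  imports Defs
begin

lemma two_edges_card:
  assumes "card e1 = 2" "card e2 = 2" "e1 \<noteq> e2" "finite X" "e1 \<subseteq> X" "e2 \<subseteq> X"
  shows "card X \<ge> 3"
proof (rule ccontr)
  assume "\<not> 3 \<le> card X"
  hence X2: "card X \<le> 2" by simp
  have fU: "finite (e1 \<union> e2)" using assms finite_subset by blast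
  have "card (e1 \<union> e2) \<le> card X" using assms card_mono by (metis Un_subset_iff)
  hence cu: "card (e1 \<union> e2) \<le> 2" using X2 by simp
  have "e1 = e1 \<union> e2" using card_seteq[OF fU, of e1] cu assms(1) by auto
  moreover have "e2 = e1 \<union> e2" using card_seteq[OF fU, of e2] cu assms(2) by auto
  ultimately show False using assms(3) by simp
qed

lemma consec_restrict_le:
  assumes "consecutive A"
  shows "consecutive (A \<inter> {..s})"
proof -
  obtain a b where "A = {a..b}" using assms unfolding consecutive_def by blast
  hence "A \<inter> {..s} = {a..min b s}" by auto
  thus ?thesis unfolding consecutive_def by blast
qed

lemma consec_restrict_ge:
  assumes "consecutive A"
  shows "consecutive (A \<inter> {s..})"
proof -
  obtain a b where "A = {a..b}" using assms unfolding consecutive_def by blast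
  hence "A \<inter> {s..} = {max a s..b}" by auto
  thus ?thesis unfolding consecutive_def by blast
qed

lemma key:
  fixes E0 :: "'a set set" and c :: "'a set \<Rightarrow> nat" and k :: real
  assumes fin: "finite E0" and edges: "\<forall>e\<in>E0. card e = 2" and k0: "k \<ge> 0"
    and dens: "\<And>F. F \<subseteq> E0 \<Longrightarrow> 3 \<le> card (\<Union>F) \<Longrightarrow> real (card F) \<le> k * (real (card (\<Union>F)) - 2)"
  shows "F \<subseteq> E0 \<Longrightarrow> F \<noteq> {} \<Longrightarrow> (\<forall>v. consecutive (c ` {e\<in>F. v\<in>e}))
     \<Longrightarrow> 2 * (real (card (c ` F)) - 1) \<le> k * (real (card (\<Union>F)) - 2)"
proof (induction "card F" arbitrary: F rule: less_induct)
  case less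
  have finF: "finite F" using less.prems(1) fin finite_subset by blast
  have fine: "\<And>e. e \<in> E0 \<Longrightarrow> finite e" using edges card.infinite by fastforce
  have finU: "\<And>G. G \<subseteq> F \<Longrightarrow> finite (\<Union>G)"
    using finF less.prems(1) fine by (meson finite_Union finite_subset subset_iff)
  define S where "S = c ` F"
  have finS: "finite S" using finF S_def by simp
  have neS: "S \<noteq> {}" using less.prems(2) S_def by simp
  show ?case
  proof (cases "\<exists>s\<in>S. (\<exists>a\<in>S. a < s) \<and> (\<exists>b\<in>S. s < b) \<and> card {e\<in>F. c e = s} = 1")
    case True
    then obtain s a b where s: "s \<in> S" "a \<in> S" "a < s" "b\<in>S" "s < b" "card {e\<in>F. c e = s} = 1"
      by blast
    then obtain e0 where e0: "{e\<in>F. c e = s} = {e0}" using card_1_singletonE by blast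
    hence e0F: "e0 \<in> F" "c e0 = s" by auto
    have uniq: "\<And>e. e \<in> F \<Longrightarrow> c e = s \<Longrightarrow> e = e0" using e0 by auto
    define F1 where "F1 = {e\<in>F. c e \<le> s}"
    define F2 where "F2 = {e\<in>F. s \<le> c e}"
    obtain eb where eb: "eb \<in> F" "c eb = b" using s S_def by auto
    obtain ea where ea: "ea \<in> F" "c ea = a" using s S_def by auto
    have "eb \<notin> F1" using eb s unfolding F1_def by auto
    hence "F1 \<subset> F" using eb unfolding F1_def by blast
    hence c1: "card F1 < card F" using finF psubset_card_mono by blast
    have "ea \<notin> F2" using ea s unfolding F2_def by auto
    hence "F2 \<subset> F" using ea unfolding F2_def by blast
    hence c2: "card F2 < card F" using finF psubset_card_mono by blast
    have ne1: "F1 \<noteq> {}" and ne2: "F2 \<noteq> {}" using e0F unfolding F1_def F2_def by auto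
    have sub1: "F1 \<subseteq> E0" and sub2: "F2 \<subseteq> E0" using less.prems(1) unfolding F1_def F2_def by auto
    have cons1: "\<forall>v. consecutive (c ` {e\<in>F1. v\<in>e})"
    proof
      fix v
      have "c ` {e\<in>F1. v\<in>e} = c ` {e\<in>F. v\<in>e} \<inter> {..s}" unfolding F1_def by auto
      thus "consecutive (c ` {e\<in>F1. v\<in>e})" using consec_restrict_le less.prems(3) by metis
    qed
    have cons2: "\<forall>v. consecutive (c ` {e\<in>F2. v\<in>e})"
    proof
      fix v
      have "c ` {e\<in>F2. v\<in>e} = c ` {e\<in>F. v\<in>e} \<inter> {s..}" unfolding F2_def by auto
      thus "consecutive (c ` {e\<in>F2. v\<in>e})" using consec_restrict_ge less.prems(3) by metis
    qed
    have IH1: "2 * (real (card (c ` F1)) - 1) \<le> k * (real (card (\<Union>F1)) - 2)"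
      using less.hyps[OF c1 sub1 ne1 cons1] .
    have IH2: "2 * (real (card (c ` F2)) - 1) \<le> k * (real (card (\<Union>F2)) - 2)"
      using less.hyps[OF c2 sub2 ne2 cons2] .
    have im1: "c ` F1 = S \<inter> {..s}" unfolding F1_def S_def by auto
    have im2: "c ` F2 = S \<inter> {s..}" unfolding F2_def S_def by auto
    have "card (S \<inter> {..s}) + card (S \<inter> {s..}) = card ((S \<inter> {..s}) \<union> (S \<inter> {s..})) + card ((S \<inter> {..s}) \<inter> (S \<inter> {s..}))"
      using card_Un_Int finS by blast
    moreover have "(S \<inter> {..s}) \<union> (S \<inter> {s..}) = S" by auto
    moreover have "(S \<inter> {..s}) \<inter> (S \<inter> {s..}) = {s}" using s by auto
    ultimately have cardS: "card (c ` F1) + card (c ` F2) = card S + 1" using im1 im2 by simp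
    have "F1 \<union> F2 = F" unfolding F1_def F2_def by auto
    hence U: "\<Union>F1 \<union> \<Union>F2 = \<Union>F" by blast
    have I: "\<Union>F1 \<inter> \<Union>F2 = e0"
    proof
      show "e0 \<subseteq> \<Union>F1 \<inter> \<Union>F2" using e0F unfolding F1_def F2_def by auto
    next
      show "\<Union>F1 \<inter> \<Union>F2 \<subseteq> e0"
      proof
        fix w assume "w \<in> \<Union>F1 \<inter> \<Union>F2"
        then obtain e1 e2 where e1: "e1 \<in> F" "w \<in> e1" "c e1 \<le> s" and e2: "e2 \<in> F" "w \<in> e2" "s \<le> c e2"
          unfolding F1_def F2_def by auto
        obtain x y where xy: "c ` {e\<in>F. w\<in>e} = {x..y}" using less.prems(3) unfolding consecutive_def by blast
        have "c e1 \<in> {x..y}" "c e2 \<in> {x..y}" using e1 e2 xy[symmetric] by auto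
        hence "s \<in> {x..y}" using e1 e2 by auto
        hence "s \<in> c ` {e\<in>F. w\<in>e}" using xy by simp
        then obtain e where "e \<in> F" "w \<in> e" "c e = s" by auto
        thus "w \<in> e0" using uniq by blast
      qed
    qed
    have "card (\<Union>F1) + card (\<Union>F2) = card (\<Union>F1 \<union> \<Union>F2) + card (\<Union>F1 \<inter> \<Union>F2)"
      using card_Un_Int finU F1_def F2_def by (metis (no_types, lifting) mem_Collect_eq subsetI)
    moreover have "card e0 = 2" using edges e0F less.prems(1) by auto
    ultimately have cardU: "card (\<Union>F1) + card (\<Union>F2) = card (\<Union>F) + 2" using U I by simp
    have r1: "real (card (c ` F1)) + real (card (c ` F2)) = real (card S) + 1"
      using cardS by (metis of_nat_1 of_nat_add)
    have r2: "real (card (\<Union>F1)) + real (card (\<Union>F2)) = real (card (\<Union>F)) + 2"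
      using cardU by (metis of_nat_add of_nat_numeral)
    have "k * (real (card (\<Union>F1)) - 2) + k * (real (card (\<Union>F2)) - 2)
        = k * (real (card (\<Union>F1)) + real (card (\<Union>F2)) - 4)" by (simp add: algebra_simps)
    also have "\<dots> = k * (real (card (\<Union>F)) - 2)" using r2 by simp
    finally have kk: "k * (real (card (\<Union>F1)) - 2) + k * (real (card (\<Union>F2)) - 2) = k * (real (card (\<Union>F)) - 2)" .
    have gen: "2*(x-1) \<le> K" if "2*(x1-1) \<le> K1" "2*(x2-1) \<le> K2" "x1 + x2 = x + 1" "K1 + K2 = K"
      for x1 x2 x K1 K2 K :: real
      using that by argo
    show ?thesis using gen[OF IH1 IH2 r1 kk] unfolding S_def .
  next
    case False
    show ?thesis
    proof (cases "card S = 1")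
      case True
      obtain e where e: "e \<in> F" using less.prems(2) by blast
      have "card e = 2" using e edges less.prems(1) by auto
      moreover have "card e \<le> card (\<Union>F)" using e finU[of F] card_mono by blast
      ultimately have "real (card (\<Union>F)) - 2 \<ge> 0" by simp
      hence "k * (real (card (\<Union>F)) - 2) \<ge> 0" using k0 by simp
      thus ?thesis using True S_def by simp
    next
      case False2: False
      hence S2: "card S \<ge> 2" using finS neS by (metis One_nat_def Suc_1 card_0_eq less_2_cases not_less)
      define M where "M = {Min S, Max S}"
      have fib: "card F = (\<Sum>s\<in>S. card {e\<in>F. c e = s})"
        using sum.image_gen[OF finF, of "\<lambda>_. 1::nat" c] unfolding S_def by simp
      have each: "2 \<le> card {e\<in>F. c e = s} + (if s \<in> M then 1 else 0)" if sS: "s \<in> S" for s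
      proof -
        have ne: "{e\<in>F. c e = s} \<noteq> {}" using sS S_def by auto
        have fn: "finite {e\<in>F. c e = s}" using finF by simp
        have ge1: "card {e\<in>F. c e = s} \<ge> 1" using ne fn by (simp add: Suc_le_eq card_gt_0_iff)
        show ?thesis
        proof (cases "s \<in> M")
          case True thus ?thesis using ge1 by simp
        next
          case False
          have "Min S \<le> s" "s \<le> Max S" using sS finS by auto
          hence "Min S < s" "s < Max S" using False M_def by (auto simp: order.order_iff_strict)
          moreover have "Min S \<in> S" "Max S \<in> S" using finS neS by auto
          ultimately have "card {e\<in>F. c e = s} \<noteq> 1" using \<open>\<not> (\<exists>s\<in>S. _)\<close> sS by blast
          thus ?thesis using ge1 False by simp
        qed
      qed
      have "(\<Sum>s\<in>S. (2::nat)) \<le> (\<Sum>s\<in>S. card {e\<in>F. c e = s} + (if s \<in> M then 1 else 0))"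
        using each by (rule sum_mono)
      also have "\<dots> = card F + (\<Sum>s\<in>S. (if s \<in> M then 1 else 0))"
        using fib by (simp add: sum.distrib)
      also have "(\<Sum>s\<in>S. (if s \<in> M then 1 else 0)) = card (S \<inter> M)"
        using sum.inter_restrict[OF finS, of "\<lambda>_. (1::nat)" M] by simp
      also have "card (S \<inter> M) \<le> 2"
      proof -
        have "card (S \<inter> M) \<le> card M" using M_def by (simp add: card_mono)
        also have "card M \<le> 2" unfolding M_def by (simp add: card_insert_if)
        finally show ?thesis .
      qed
      finally have cF: "2 * card S \<le> card F + 2" by simp
      hence cF2: "card F \<ge> 2" using S2 by simp
      obtain e1 where e1: "e1 \<in> F" using less.prems(2) by blast
      have "card (F - {e1}) \<ge> 1" using cF2 e1 finF by simp
      then obtain e2 where e2: "e2 \<in> F" "e2 \<noteq> e1" by (metis Diff_iff card_0_eq finF finite_Diff insertI1 not_one_le_zero subsetI subset_empty)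
      have "card (\<Union>F) \<ge> 3"
        using two_edges_card[of e1 e2 "\<Union>F"] e1 e2 edges less.prems(1) finU[of F] by auto
      hence d: "real (card F) \<le> k * (real (card (\<Union>F)) - 2)" using dens less.prems(1) by blast
      have "2 * real (card S) \<le> real (card F) + 2" using cF by (metis of_nat_add of_nat_le_iff of_nat_mult of_nat_numeral)
      hence "2 * (real (card S) - 1) \<le> real (card F)" by argo
      hence "2 * (real (card S) - 1) \<le> k * (real (card (\<Union>F)) - 2)" using d by (rule order_trans)
      thus ?thesis unfolding S_def .
    qed
  qed
qed

theorem theorem4:
  fixes V :: "'a set" and E :: "'a set set" and k :: real
  assumes "simple_graph V E"
    and "k \<ge> 0"
    and "card V \<ge> 2"
    and "\<forall>W F. subgraph W F V E \<and> card W \<ge> 3 \<longrightarrow> real (card F) \<le> k * (real (card W) - 2)"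
    and "interval_colourable V E"
  shows "real (t_max V E) \<le> k / 2 * real (card V) + 1 - k"
proof -
  have finV: "finite V" and ed: "\<forall>e\<in>E. e \<subseteq> V \<and> card e = 2" using assms(1) unfolding simple_graph_def by auto
  have finE: "finite E" using finV ed by (meson Pow_iff finite_Pow_iff finite_subset subsetI)
  define T where "T = {card (c ` E) | c. interval_colouring V E c}"
  have "T \<subseteq> {..card E}" unfolding T_def using card_image_le[OF finE] by auto
  hence finT: "finite T" using finite_subset by blast
  have "T \<noteq> {}" using assms(5) unfolding T_def interval_colourable_def by auto
  hence "Max T \<in> T" using finT by simp
  then obtain c where c: "interval_colouring V E c" "t_max V E = card (c ` E)"
    unfolding T_def t_max_def by auto
  have nV: "real (card V) - 2 \<ge> 0" using assms(3) by simp
  show ?thesis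
  proof (cases "E = {}")
    case True
    hence "t_max V E = 0" using c by simp
    moreover have "k / 2 * real (card V) + 1 - k = k * (real (card V) - 2) / 2 + 1" by (simp add: field_simps)
    moreover have "k * (real (card V) - 2) \<ge> 0" using assms(2) nV by simp
    ultimately show ?thesis by simp
  next
    case False
    have dens: "real (card F) \<le> k * (real (card (\<Union>F)) - 2)" if "F \<subseteq> E" "3 \<le> card (\<Union>F)" for F
    proof -
      have "subgraph (\<Union>F) F V E" unfolding subgraph_def using that ed by auto
      thus ?thesis using assms(4) that by blast
    qed
    have cons: "\<forall>v. consecutive (c ` {e\<in>E. v\<in>e})"
    proof
      fix v
      show "consecutive (c ` {e\<in>E. v\<in>e})"
      proof (cases "v \<in> V")
        case True thus ?thesis using c(1) unfolding interval_colouring_def by blast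
      next
        case False
        hence "{e\<in>E. v\<in>e} = {}" using ed by auto
        hence "c ` {e\<in>E. v\<in>e} = {1..0}" by simp
        thus ?thesis unfolding consecutive_def by blast
      qed
    qed
    have K: "2 * (real (card (c ` E)) - 1) \<le> k * (real (card (\<Union>E)) - 2)"
      using key[OF finE _ assms(2) dens, of E c] ed False cons by blast
    have "card (\<Union>E) \<le> card V" using ed finV by (simp add: Sup_le_iff card_mono)
    hence "k * (real (card (\<Union>E)) - 2) \<le> k * (real (card V) - 2)" using assms(2) by (simp add: mult_left_mono)
    hence "2 * (real (card (c ` E)) - 1) \<le> k * (real (card V) - 2)" using K by linarith
    hence "real (card (c ` E)) \<le> k * (real (card V) - 2) / 2 + 1" by (simp add: field_simps)
    moreover have "k / 2 * real (card V) + 1 - k = k * (real (card V) - 2) / 2 + 1" by (simp add: field_simps)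
    ultimately show ?thesis using c(2) by simp
  qed
qed

end
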